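(* Assume $\overline{c}>p$. Then there exist constants $K_2>0$ and $K_3>0$ such that $$V(x,c_1)-V(x,c_2)\le\left[K_2+\frac{K_3x}{(c_1-p)^2}\right](c_2-c_1)$$ for all $x\ge0$ and $p<c_1\le c_2\le\overline{c}$.
   Context: Cramér–Lundberg model: the uncontrolled surplus is $X_t=x+pt-\sum_{i=1}^{N_t}U_i$, where $x\ge0$ is the initial surplus, $p>0$ the premium rate, $N_t$ a Poisson process with intensity $\beta>0$, and the claims $U_i$ are i.i.d. positive random variables, independent of $N$, with continuous distribution function $F$; $p>\beta\mathbb{E}[U_1]$. Standing assumption (A1): $F$ is globally Lipschitz, $0\le F(y)-F(x)\le K(y-x)$ for $x<y$. Let $(\mathcal{F}_t)$ be the completed filtration generated by $X$. Fix $\overline{c}>0$ and $q>0$. $\Pi_{x,c,\overline{c}}$ is the set of càdlàg, adapted, non-decreasing processes $C$ with $c\le C_t\le\overline{c}$; $X^C_t=X_t-\int_0^tC_sds$ ($X_0=x$), $\tau=\inf\{t\ge0:X^C_t<0\}$, $J(x;C)=\mathbb{E}[\int_0^\tau e^{-qs}C_sds]$, $V(x,c)=\sup_{C\in\Pi_{x,c,\overline{c}}}J(x;C)$. *)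

theory Defs
  imports "HOL-Probability.Probability"
begin

text \<open>Cramer-Lundberg model built from i.i.d. exponential inter-arrival times E 0, E 1, ...
  (Poisson process of intensity beta) and i.i.d. claims U 0, U 1, ...\<close>

definition arrival :: "(nat \<Rightarrow> 'w \<Rightarrow> real) \<Rightarrow> nat \<Rightarrow> 'w \<Rightarrow> real" where
  "arrival E n \<omega> = (\<Sum>i\<le>n. E i \<omega>)"

definition Ncount :: "(nat \<Rightarrow> 'w \<Rightarrow> real) \<Rightarrow> real \<Rightarrow> 'w \<Rightarrow> nat" where
  "Ncount E t \<omega> = card {n. arrival E n \<omega> \<le> t}"

definition surplus :: "real \<Rightarrow> (nat \<Rightarrow> 'w \<Rightarrow> real) \<Rightarrow> (nat \<Rightarrow> 'w \<Rightarrow> real) \<Rightarrow> real \<Rightarrow> real \<Rightarrow> 'w \<Rightarrow> real" where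
  "surplus p E U x t \<omega> = x + p * t - (\<Sum>i<Ncount E t \<omega>. U i \<omega>)"

definition nat_filtration :: "'w measure \<Rightarrow> (real \<Rightarrow> 'w \<Rightarrow> real) \<Rightarrow> real \<Rightarrow> 'w set set" where
  "nat_filtration M Y t = sigma_sets (space M)
     ({Y s -` A \<inter> space M | s A. 0 \<le> s \<and> s \<le> t \<and> A \<in> sets borel}
      \<union> {N. N \<subseteq> space M \<and> (\<exists>A\<in>null_sets M. N \<subseteq> A)})"

definition adapted_to :: "'w measure \<Rightarrow> (real \<Rightarrow> 'w set set) \<Rightarrow> (real \<Rightarrow> 'w \<Rightarrow> real) \<Rightarrow> bool" where
  "adapted_to M Fl C \<longleftrightarrow> (\<forall>t\<ge>0. \<forall>A\<in>sets borel. C t -` A \<inter> space M \<in> Fl t)"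

definition admissible :: "'w measure \<Rightarrow> (real \<Rightarrow> 'w set set) \<Rightarrow> real \<Rightarrow> real \<Rightarrow> (real \<Rightarrow> 'w \<Rightarrow> real) \<Rightarrow> bool" where
  "admissible M Fl c cbar C \<longleftrightarrow> adapted_to M Fl C \<and>
     (\<forall>\<omega>\<in>space M.
        (\<forall>t\<ge>0. c \<le> C t \<omega> \<and> C t \<omega> \<le> cbar) \<and>
        mono_on {0..} (\<lambda>t. C t \<omega>) \<and>
        (\<forall>t\<ge>0. continuous (at_right t) (\<lambda>s. C s \<omega>)) \<and>
        (\<forall>t>0. \<exists>l. ((\<lambda>s. C s \<omega>) \<longlongrightarrow> l) (at_left t)))"

definition controlled :: "(real \<Rightarrow> 'w \<Rightarrow> real) \<Rightarrow> (real \<Rightarrow> 'w \<Rightarrow> real) \<Rightarrow> real \<Rightarrow> 'w \<Rightarrow> real" where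
  "controlled X C t \<omega> = X t \<omega> - integral {0..t} (\<lambda>s. C s \<omega>)"

definition ruin_time :: "(real \<Rightarrow> 'w \<Rightarrow> real) \<Rightarrow> 'w \<Rightarrow> ereal" where
  "ruin_time Y \<omega> = (if \<exists>t\<ge>0. Y t \<omega> < 0 then ereal (Inf {t. 0 \<le> t \<and> Y t \<omega> < 0}) else \<infinity>)"

definition payoff :: "real \<Rightarrow> (real \<Rightarrow> 'w \<Rightarrow> real) \<Rightarrow> (real \<Rightarrow> 'w \<Rightarrow> real) \<Rightarrow> 'w \<Rightarrow> real" where
  "payoff q X C \<omega> = (\<integral>s. indicator {s. 0 \<le> s \<and> ereal s < ruin_time (controlled X C) \<omega>} s
                         * (exp (- q * s) * C s \<omega>) \<partial>lborel)"

definition Jfun :: "'w measure \<Rightarrow> real \<Rightarrow> (real \<Rightarrow> 'w \<Rightarrow> real) \<Rightarrow> (real \<Rightarrow> 'w \<Rightarrow> real) \<Rightarrow> real" where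
  "Jfun M q X C = (\<integral>\<omega>. payoff q X C \<omega> \<partial>M)"

definition Vfun :: "'w measure \<Rightarrow> real \<Rightarrow> (nat \<Rightarrow> 'w \<Rightarrow> real) \<Rightarrow> (nat \<Rightarrow> 'w \<Rightarrow> real)
                     \<Rightarrow> real \<Rightarrow> real \<Rightarrow> real \<Rightarrow> real \<Rightarrow> real" where
  "Vfun M p E U q cbar x c =
     (SUP C \<in> {C. admissible M (nat_filtration M (surplus p E U x)) c cbar C}.
        Jfun M q (surplus p E U x) C)"

end

theory Submission
  imports Defs
begin


lemma mono_int_on:
  fixes g :: "real \<Rightarrow> real"
  assumes "mono_on {0..} g" "0 \<le> a"
  shows "g integrable_on {a..b}"
proof (rule integrable_on_mono_on)
  show "mono_on {a..b} g" using assms by (auto simp: mono_on_def)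
qed

lemma int_lower:
  fixes g :: "real \<Rightarrow> real"
  assumes "mono_on {0..} g" "0 \<le> t" "t \<le> s" "\<And>u. u \<ge> 0 \<Longrightarrow> c \<le> g u"
  shows "integral {0..s} g - integral {0..t} g \<ge> c * (s - t)"
proof -
  have i: "g integrable_on {0..s}" "g integrable_on {t..s}" using mono_int_on assms by auto
  have "integral {0..t} g + integral {t..s} g = integral {0..s} g"
    using Henstock_Kurzweil_Integration.integral_combine[OF assms(2) assms(3) i(1)] .
  moreover have "integral {t..s} (\<lambda>_. c) \<le> integral {t..s} g"
    by (rule integral_le) (use i assms in auto)
  ultimately show ?thesis using assms by (simp add: algebra_simps)
qed

lemma int_lower0:
  fixes g :: "real \<Rightarrow> real"
  assumes "mono_on {0..} g" "0 \<le> s" "\<And>u. u \<ge> 0 \<Longrightarrow> c \<le> g u"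
  shows "integral {0..s} g \<ge> c * s"
  using int_lower[OF assms(1) order_refl assms(2) assms(3)] by simp

lemma int_diff_upper:
  fixes g h :: "real \<Rightarrow> real"
  assumes "mono_on {0..} g" "mono_on {0..} h" "0 \<le> t" "\<And>u. u \<ge> 0 \<Longrightarrow> h u \<le> g u + d"
  shows "integral {0..t} h - integral {0..t} g \<le> d * t"
proof -
  have i: "g integrable_on {0..t}" "h integrable_on {0..t}" using mono_int_on assms by auto
  have "integral {0..t} h \<le> integral {0..t} (\<lambda>u. g u + d)"
    by (rule integral_le) (use i assms in \<open>auto intro: integrable_add\<close>)
  also have "\<dots> = integral {0..t} g + d * t"
    using i assms integral_add[OF i(1) integrable_const_ivl[of d 0 t]] by simp
  finally show ?thesis by simp
qed


lemma ruin_finite: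
  fixes X C :: "real \<Rightarrow> 'w \<Rightarrow> real"
  assumes X: "\<And>t. t \<ge> 0 \<Longrightarrow> X t \<omega> \<le> x + p*t"
    and C: "mono_on {0..} (\<lambda>t. C t \<omega>)" "\<And>t. t \<ge> 0 \<Longrightarrow> c \<le> C t \<omega>"
    and pc: "p < c" and x: "0 \<le> x"
  shows "ruin_time (controlled X C) \<omega> = ereal (Inf {t. 0 \<le> t \<and> controlled X C t \<omega> < 0})"
    "{t. 0 \<le> t \<and> controlled X C t \<omega> < 0} \<noteq> {}"
    "0 \<le> Inf {t. 0 \<le> t \<and> controlled X C t \<omega> < 0}"
    "Inf {t. 0 \<le> t \<and> controlled X C t \<omega> < 0} \<le> x/(c-p)"
proof -
  let ?T = "{t. 0 \<le> t \<and> controlled X C t \<omega> < 0}"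
  have mem: "t \<in> ?T" if "t > x/(c-p)" for t
  proof -
    have t0: "t \<ge> 0" using that x pc by (smt (verit) divide_nonneg_pos)
    have "c * t \<le> integral {0..t} (\<lambda>s. C s \<omega>)" using int_lower0[OF C(1) t0] C(2) by auto
    moreover have "x < (c-p)*t" using that pc by (simp add: field_simps)
    ultimately show ?thesis using X[OF t0] t0 by (auto simp: controlled_def algebra_simps)
  qed
  have ne: "?T \<noteq> {}" using mem[of "x/(c-p) + 1"] by auto
  have bdd: "bdd_below ?T" by (rule bdd_belowI[of _ 0]) auto
  show "?T \<noteq> {}" by (fact ne)
  show "ruin_time (controlled X C) \<omega> = ereal (Inf ?T)"
    using ne unfolding ruin_time_def by auto
  show "0 \<le> Inf ?T" using ne by (intro cInf_greatest) auto
  show "Inf ?T \<le> x/(c-p)"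
  proof (rule ccontr)
    assume nle: "\<not> Inf ?T \<le> x/(c-p)"
    moreover have "\<And>a b::real. \<not> a \<le> b \<Longrightarrow> b < (a+b)/2" by (auto simp: field_simps)
    ultimately have "x/(c-p) < (Inf ?T + x/(c-p))/2" by blast
    then have "(Inf ?T + x/(c-p))/2 \<in> ?T" by (intro mem)
    then have "Inf ?T \<le> (Inf ?T + x/(c-p))/2" using bdd by (intro cInf_lower)
    then show False using nle by simp
  qed
qed

lemma ruin_compare:
  fixes X C D :: "real \<Rightarrow> 'w \<Rightarrow> real"
  assumes Xm: "\<And>t s. 0 \<le> t \<Longrightarrow> t \<le> s \<Longrightarrow> X s \<omega> \<le> X t \<omega> + p*(s-t)"
    and X: "\<And>t. t \<ge> 0 \<Longrightarrow> X t \<omega> \<le> x + p*t"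
    and C: "mono_on {0..} (\<lambda>t. C t \<omega>)" "\<And>t. t \<ge> 0 \<Longrightarrow> c1 \<le> C t \<omega>"
    and D: "mono_on {0..} (\<lambda>t. D t \<omega>)" "\<And>t. t \<ge> 0 \<Longrightarrow> c2 \<le> D t \<omega>"
       "\<And>t. t \<ge> 0 \<Longrightarrow> D t \<omega> \<le> C t \<omega> + (c2 - c1)"
    and pc: "p < c1" "c1 \<le> c2" and x: "0 \<le> x"
  shows "Inf {t. 0 \<le> t \<and> controlled X C t \<omega> < 0}
         \<le> Inf {t. 0 \<le> t \<and> controlled X D t \<omega> < 0} + (c2-c1)*x/(c1-p)^2"
proof -
  let ?T1 = "{t. 0 \<le> t \<and> controlled X C t \<omega> < 0}"
  let ?T2 = "{t. 0 \<le> t \<and> controlled X D t \<omega> < 0}"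
  have pc2: "p < c2" using pc by simp
  note R1 = ruin_finite[where X=X and C=C and \<omega>=\<omega>, OF X C pc(1) x]
  note R2 = ruin_finite[where X=X and C=D and \<omega>=\<omega>, OF X D(1,2) pc2 x]
  define T2 where "T2 = Inf ?T2"
  define r where "r = (c2-c1)/(c1-p)"
  have r0: "r \<ge> 0" using pc by (simp add: r_def)
  have bdd1: "bdd_below ?T1" by (rule bdd_belowI[of _ 0]) auto
  have T2b: "T2 * r \<le> (c2-c1)*x/(c1-p)^2"
  proof -
    have "T2 \<le> x/(c2-p)" using R2(4) by (simp add: T2_def)
    also have "\<dots> \<le> x/(c1-p)" using pc x by (intro divide_left_mono) auto
    finally have "T2 * r \<le> x/(c1-p) * r" using r0 by (intro mult_right_mono)
    also have "\<dots> = (c2-c1)*x/(c1-p)^2" by (simp add: r_def power2_eq_square field_simps)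
    finally show ?thesis .
  qed
  show ?thesis
  proof (rule field_le_epsilon)
    fix e :: real assume e: "e > 0"
    define e' where "e' = e/(2+r)"
    have e': "e' > 0" using e r0 by (simp add: e'_def)
    have ee: "e' * (2+r) = e" using r0 by (simp add: e'_def)
    obtain t where t: "t \<in> ?T2" "t < T2 + e'"
      using cInf_lessD[OF R2(2), of "T2 + e'"] e' by (auto simp: T2_def)
    have t0: "0 \<le> t" using t by auto
    have "integral {0..t} (\<lambda>s. D s \<omega>) - integral {0..t} (\<lambda>s. C s \<omega>) \<le> (c2-c1) * t"
      by (rule int_diff_upper[OF C(1) D(1) t0]) (use D(3) in auto)
    then have Y1t: "controlled X C t \<omega> < (c2-c1)*t" using t by (auto simp: controlled_def)
    define s where "s = t + r*t + e'"
    have ts: "t \<le> s" using r0 t0 e' by (simp add: s_def)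
    have "integral {0..s} (\<lambda>s. C s \<omega>) - integral {0..t} (\<lambda>s. C s \<omega>) \<ge> c1 * (s - t)"
      by (rule int_lower[OF C(1) t0 ts]) (use C(2) in auto)
    then have "controlled X C s \<omega> \<le> controlled X C t \<omega> + (p - c1) * (s - t)"
      using Xm[OF t0 ts] by (auto simp: controlled_def algebra_simps)
    also have "(p - c1) * (s - t) = - (c2-c1)*t - (c1-p)*e'"
      using pc by (simp add: s_def r_def field_simps)
    finally have "controlled X C s \<omega> < - (c1-p)*e'" using Y1t by (simp add: algebra_simps)
    also have "\<dots> < 0" using pc e' by (intro mult_neg_pos) auto
    finally have "s \<in> ?T1" using t0 ts by auto
    then have "Inf ?T1 \<le> s" using bdd1 by (intro cInf_lower)
    also have "s \<le> (T2 + e') * (1 + r) + e'"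
    proof -
      have "r*t \<le> r*(T2+e')" using t r0 by (intro mult_left_mono) auto
      then show ?thesis using t by (simp add: s_def algebra_simps)
    qed
    also have "\<dots> = T2 + T2 * r + e' * (2 + r)" by (simp add: algebra_simps)
    also have "\<dots> \<le> T2 + (c2-c1)*x/(c1-p)^2 + e" using T2b ee by simp
    finally show "Inf ?T1 \<le> Inf ?T2 + (c2-c1)*x/(c1-p)^2 + e" by (simp add: T2_def)
  qed
qed


lemma payoff_nonneg:
  assumes "\<And>t. t \<ge> 0 \<Longrightarrow> 0 \<le> C t \<omega>"
  shows "0 \<le> payoff q X C \<omega>"
  unfolding payoff_def using assms by (intro integral_nonneg_AE) (auto simp: indicator_def)

lemma integrable_box_bound:
  fixes h :: "real \<Rightarrow> real"
  assumes "mono_on {0..} h" "\<And>t. t \<ge> 0 \<Longrightarrow> 0 \<le> h t \<and> h t \<le> B" "0 \<le> T"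
  shows "integrable lborel (\<lambda>s. indicator {0..<T} s * (exp (- q * s) * h s))"
    "(\<lambda>s. indicator {0..<T} s * (exp (- q * s) * h s)) \<in> borel_measurable borel"
proof -
  define h' where "h' s = h (max 0 s)" for s
  have "mono h'" using assms(1) unfolding h'_def mono_def mono_on_def by (simp add: max_def)
  then have hm: "h' \<in> borel_measurable borel" by (rule borel_measurable_mono)
  have eq: "(\<lambda>s. indicator {0..<T} s * (exp (- q * s) * h s)) = (\<lambda>s. indicator {0..<T} s * (exp (- q * s) * h' s))"
    by (auto simp: h'_def indicator_def fun_eq_iff)
  show m: "(\<lambda>s. indicator {0..<T} s * (exp (- q * s) * h s)) \<in> borel_measurable borel"
    unfolding eq using hm by measurable
  show "integrable lborel (\<lambda>s. indicator {0..<T} s * (exp (- q * s) * h s))"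
  proof (rule Bochner_Integration.integrable_bound[where f="\<lambda>s. (B * exp (\<bar>q\<bar> * T)) * indicator {0..<T} s"])
    show "integrable lborel (\<lambda>s. (B * exp (\<bar>q\<bar> * T)) * indicator {0..<T} s)"
      using assms(3) by (intro integrable_mult_right integrable_real_indicator) auto
    show "(\<lambda>s. indicator {0..<T} s * (exp (- q * s) * h s)) \<in> borel_measurable lborel"
      using m by simp
    show "AE x in lborel. norm (indicator {0..<T} x * (exp (- q * x) * h x))
          \<le> norm (B * exp (\<bar>q\<bar> * T) * indicator {0..<T} x)"
    proof (rule AE_I2)
      fix s :: real
      show "norm (indicator {0..<T} s * (exp (- q * s) * h s)) \<le> norm (B * exp (\<bar>q\<bar> * T) * indicator {0..<T} s)"
      proof (cases "s \<in> {0..<T}")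
        case True
        then have "exp (- q * s) \<le> exp (\<bar>q\<bar> * T)"
          by (simp add: abs_if mult_mono) (smt (verit, ccfv_SIG) mult_less_cancel_left mult_minus_left mult_nonneg_nonneg)
        moreover have "0 \<le> h s" "h s \<le> B" using assms(2)[of s] True by auto
        ultimately have "exp (- q * s) * h s \<le> exp (\<bar>q\<bar> * T) * B" by (intro mult_mono) auto
        then show ?thesis using True \<open>0 \<le> h s\<close> by (simp add: mult.commute)
      qed auto
    qed
  qed
qed

lemma payoff_compare:
  fixes X C DD :: "real \<Rightarrow> 'w \<Rightarrow> real"
  assumes Xm: "\<And>t s. 0 \<le> t \<Longrightarrow> t \<le> s \<Longrightarrow> X s \<omega> \<le> X t \<omega> + p*(s-t)"
    and X: "\<And>t. t \<ge> 0 \<Longrightarrow> X t \<omega> \<le> x + p*t"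
    and C: "mono_on {0..} (\<lambda>t. C t \<omega>)" "\<And>t. t \<ge> 0 \<Longrightarrow> c1 \<le> C t \<omega>"
       "\<And>t. t \<ge> 0 \<Longrightarrow> C t \<omega> \<le> cbar"
    and DD: "mono_on {0..} (\<lambda>t. DD t \<omega>)" "\<And>t. t \<ge> 0 \<Longrightarrow> c2 \<le> DD t \<omega>"
       "\<And>t. t \<ge> 0 \<Longrightarrow> DD t \<omega> \<le> C t \<omega> + (c2 - c1)"
       "\<And>t. t \<ge> 0 \<Longrightarrow> C t \<omega> \<le> DD t \<omega>"
       "\<And>t. t \<ge> 0 \<Longrightarrow> DD t \<omega> \<le> cbar"
    and pc: "p < c1" "c1 \<le> c2" and x: "0 \<le> x" and p0: "0 < p" and q: "0 < q"
  shows "payoff q X C \<omega> \<le> payoff q X DD \<omega> + cbar * ((c2-c1)*x/(c1-p)^2)"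
proof -
  have pc2: "p < c2" using pc by simp
  note R1 = ruin_finite[where X=X and C=C and \<omega>=\<omega>, OF X C(1,2) pc(1) x]
  note R2 = ruin_finite[where X=X and C=DD and \<omega>=\<omega>, OF X DD(1,2) pc2 x]
  define T1 where "T1 = Inf {t. 0 \<le> t \<and> controlled X C t \<omega> < 0}"
  define T2 where "T2 = Inf {t. 0 \<le> t \<and> controlled X DD t \<omega> < 0}"
  define d where "d = (c2-c1)*x/(c1-p)^2"
  have d0: "0 \<le> d" using pc x by (simp add: d_def)
  have T12: "T1 \<le> T2 + d" unfolding T1_def T2_def d_def
    by (rule ruin_compare[where X=X and C=C and D=DD and \<omega>=\<omega>, OF Xm X C(1,2) DD(1,2,3) pc x])
  have T20: "0 \<le> T2" using R2(3) by (simp add: T2_def)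
  have cb0: "0 \<le> cbar" using C(2)[of 0] C(3)[of 0] pc p0 by linarith
  define f1 where "f1 s = indicator {s. 0 \<le> s \<and> ereal s < ereal T1} s * (exp (- q * s) * C s \<omega>)" for s
  define f2 where "f2 s = indicator {0..<T2} s * (exp (- q * s) * DD s \<omega>)" for s
  define g where "g s = cbar * indicator {T2..<T2+d} s" for s
  have P1: "payoff q X C \<omega> = integral\<^sup>L lborel f1"
    unfolding payoff_def f1_def using R1(1) by (simp add: T1_def)
  have "payoff q X DD \<omega> = integral\<^sup>L lborel (\<lambda>s. indicator {s. 0 \<le> s \<and> ereal s < ereal T2} s * (exp (- q * s) * DD s \<omega>))"
    unfolding payoff_def using R2(1) by (simp add: T2_def)
  also have "\<dots> = integral\<^sup>L lborel f2"
    unfolding f2_def by (rule Bochner_Integration.integral_cong) (auto simp: indicator_def)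
  finally have P2: "payoff q X DD \<omega> = integral\<^sup>L lborel f2" .
  have i2: "integrable lborel f2" unfolding f2_def
    by (rule integrable_box_bound(1)[OF DD(1) _ T20]) (use DD(2,5) pc p0 in force)
  have ig: "integrable lborel g" unfolding g_def
    using d0 by (intro integrable_mult_right integrable_real_indicator) auto
  have intg: "integral\<^sup>L lborel g = cbar * d" unfolding g_def using d0 by simp
  have f2n: "0 \<le> f2 s" for s using DD(2)[of s] pc p0 by (auto simp: f2_def indicator_def)
  have gn: "0 \<le> g s" for s using cb0 by (auto simp: g_def indicator_def)
  have le: "f1 s \<le> f2 s + g s" for s
  proof (cases "0 \<le> s \<and> s < T1")
    case True
    show ?thesis
    proof (cases "s < T2")
      case True
      have "exp (- q * s) * C s \<omega> \<le> exp (- q * s) * DD s \<omega>"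
        using DD(4)[of s] \<open>0 \<le> s \<and> s < T1\<close> by (intro mult_left_mono) auto
      moreover have "f1 s = exp (- q * s) * C s \<omega>" "f2 s = exp (- q * s) * DD s \<omega>"
        using \<open>0 \<le> s \<and> s < T1\<close> True by (auto simp: f1_def f2_def indicator_def)
      ultimately show ?thesis using gn[of s] by linarith
    next
      case False
      then have "g s = cbar" using True T12 by (auto simp: g_def indicator_def)
      moreover have "exp (- q * s) \<le> 1" using True q by simp
      moreover have "0 \<le> C s \<omega>" "C s \<omega> \<le> cbar" using C(2,3)[of s] True pc p0 by auto
      ultimately have "exp (- q * s) * C s \<omega> \<le> g s"
        by (metis mult_left_le_one_le exp_ge_zero order_trans)
      then show ?thesis using f2n[of s] True by (auto simp: f1_def)
    qed
  next
    case False
    then show ?thesis using f2n[of s] gn[of s] by (auto simp: f1_def)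
  qed
  have "integral\<^sup>L lborel f1 \<le> integral\<^sup>L lborel f2 + integral\<^sup>L lborel g"
  proof (cases "integrable lborel f1")
    case True
    have "integral\<^sup>L lborel f1 \<le> integral\<^sup>L lborel (\<lambda>s. f2 s + g s)"
      by (rule integral_mono[OF True]) (use i2 ig le in auto)
    then show ?thesis using i2 ig by simp
  next
    case False
    then have "integral\<^sup>L lborel f1 = 0" by (rule not_integrable_integral_eq)
    moreover have "0 \<le> integral\<^sup>L lborel f2" "0 \<le> integral\<^sup>L lborel g"
      using f2n gn by (auto intro: integral_nonneg_AE)
    ultimately show ?thesis by simp
  qed
  then show ?thesis using P1 P2 intg by (simp add: d_def)
qed

lemma payoff_upper:
  fixes X C :: "real \<Rightarrow> 'w \<Rightarrow> real"
  assumes X: "\<And>t. t \<ge> 0 \<Longrightarrow> X t \<omega> \<le> x + p*t"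
    and C: "mono_on {0..} (\<lambda>t. C t \<omega>)" "\<And>t. t \<ge> 0 \<Longrightarrow> c \<le> C t \<omega>" "\<And>t. t \<ge> 0 \<Longrightarrow> C t \<omega> \<le> cbar"
    and pc: "p < c" and x: "0 \<le> x" and p0: "0 < p" and q: "0 < q"
  shows "payoff q X C \<omega> \<le> cbar * (x/(c-p))"
proof -
  note R = ruin_finite[where X=X and C=C and \<omega>=\<omega>, OF X C(1,2) pc x]
  define T where "T = Inf {t. 0 \<le> t \<and> controlled X C t \<omega> < 0}"
  have T0: "0 \<le> T" "T \<le> x/(c-p)" using R(3,4) by (auto simp: T_def)
  define f where "f s = indicator {s. 0 \<le> s \<and> ereal s < ereal T} s * (exp (- q * s) * C s \<omega>)" for s
  have P: "payoff q X C \<omega> = integral\<^sup>L lborel f"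
    unfolding payoff_def f_def using R(1) by (simp add: T_def)
  have cb0: "0 \<le> cbar" using C(2)[of 0] C(3)[of 0] pc p0 by linarith
  have le: "f s \<le> cbar * indicator {0..x/(c-p)} s" for s
  proof (cases "0 \<le> s \<and> s < T")
    case True
    have "exp (- q * s) \<le> 1" using True q by simp
    moreover have "0 \<le> C s \<omega>" "C s \<omega> \<le> cbar" using C(2,3)[of s] True pc p0 by auto
    ultimately have "exp (- q * s) * C s \<omega> \<le> cbar"
      by (metis mult_left_le_one_le exp_ge_zero order_trans)
    moreover have "f s = exp (- q * s) * C s \<omega>" using True by (simp add: f_def)
    moreover have "s \<in> {0..x/(c-p)}" using True T0 by auto
    ultimately show ?thesis by simp
  next
    case False
    then show ?thesis using cb0 by (auto simp: f_def indicator_def)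
  qed
  have ib: "integrable lborel (\<lambda>s. cbar * indicator {0..x/(c-p)} s :: real)"
    by (intro integrable_mult_right integrable_real_indicator) (use x pc in auto)
  have "integral\<^sup>L lborel f \<le> cbar * (x/(c-p))"
  proof (cases "integrable lborel f")
    case True
    have "integral\<^sup>L lborel f \<le> integral\<^sup>L lborel (\<lambda>s. cbar * indicator {0..x/(c-p)} s :: real)"
      by (rule integral_mono[OF True ib]) (use le in auto)
    also have "\<dots> = cbar * (x/(c-p))" using x pc by simp
    finally show ?thesis .
  next
    case False
    then show ?thesis using cb0 x pc by (simp add: not_integrable_integral_eq)
  qed
  then show ?thesis using P by simp
qed


lemma arrival_measurable[measurable]:
  assumes [measurable]: "\<And>i. E i \<in> borel_measurable M"
  shows "arrival E n \<in> borel_measurable M"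
  unfolding arrival_def by measurable

lemma card_pred_measurable:
  fixes P :: "nat \<Rightarrow> 'w \<Rightarrow> bool"
  assumes [measurable]: "\<And>n. Measurable.pred M (P n)"
  shows "(\<lambda>\<omega>. card {n. P n \<omega>}) \<in> measurable M (count_space UNIV)"
proof (rule measurable_count_space_eq2_countable[THEN iffD2], safe)
  fix k :: nat
  have fin: "finite {n. P n \<omega>} \<longleftrightarrow> (\<exists>m. \<forall>n\<ge>m. \<not> P n \<omega>)" for \<omega>
  proof
    assume "finite {n. P n \<omega>}"
    then obtain m where "\<forall>n\<in>{n. P n \<omega>}. n < m" using finite_nat_bounded by blast
    then show "\<exists>m. \<forall>n\<ge>m. \<not> P n \<omega>" by (metis leD mem_Collect_eq)
  next
    assume "\<exists>m. \<forall>n\<ge>m. \<not> P n \<omega>"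
    then obtain m where "\<forall>n\<ge>m. \<not> P n \<omega>" by blast
    then have "{n. P n \<omega>} \<subseteq> {..<m}" by (auto simp: not_less[symmetric])
    then show "finite {n. P n \<omega>}" by (rule finite_subset) auto
  qed
  have cm: "card {n. P n \<omega>} = (\<Sum>n<m. if P n \<omega> then 1 else 0)" if "\<forall>n\<ge>m. \<not> P n \<omega>" for m \<omega>
  proof -
    have "{n. P n \<omega>} = {n\<in>{..<m}. P n \<omega>}" using that by (auto simp: not_less[symmetric])
    then show ?thesis by (simp add: sum.If_cases Int_def)
  qed
  have eq: "(\<lambda>\<omega>. card {n. P n \<omega>}) -` {k} \<inter> space M =
    {\<omega>\<in>space M. (\<exists>m. (\<forall>n\<ge>m. \<not> P n \<omega>) \<and> real (\<Sum>n<m. if P n \<omega> then 1 else 0) = real k)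
       \<or> ((\<forall>m. \<exists>n\<ge>m. P n \<omega>) \<and> k = 0)}"
  proof (intro set_eqI iffI)
    fix \<omega> assume \<omega>: "\<omega> \<in> (\<lambda>\<omega>. card {n. P n \<omega>}) -` {k} \<inter> space M"
    show "\<omega> \<in> {\<omega>\<in>space M. (\<exists>m. (\<forall>n\<ge>m. \<not> P n \<omega>) \<and> real (\<Sum>n<m. if P n \<omega> then 1 else 0) = real k)
       \<or> ((\<forall>m. \<exists>n\<ge>m. P n \<omega>) \<and> k = 0)}"
    proof (cases "finite {n. P n \<omega>}")
      case True
      then obtain m where m: "\<forall>n\<ge>m. \<not> P n \<omega>" using fin by blast
      have "card {n. P n \<omega>} = k" "\<omega> \<in> space M" using \<omega> by auto
      then show ?thesis using cm[OF m] m by (auto simp del: of_nat_sum intro!: exI[of _ m])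
    next
      case False
      then show ?thesis using \<omega> fin by auto
    qed
  next
    fix \<omega> assume \<omega>: "\<omega> \<in> {\<omega>\<in>space M. (\<exists>m. (\<forall>n\<ge>m. \<not> P n \<omega>) \<and> real (\<Sum>n<m. if P n \<omega> then 1 else 0) = real k)
       \<or> ((\<forall>m. \<exists>n\<ge>m. P n \<omega>) \<and> k = 0)}"
    then show "\<omega> \<in> (\<lambda>\<omega>. card {n. P n \<omega>}) -` {k} \<inter> space M"
    proof (elim CollectE conjE disjE exE)
      fix m assume "\<omega> \<in> space M" "\<forall>n\<ge>m. \<not> P n \<omega>" "real (\<Sum>n<m. if P n \<omega> then 1 else 0) = real k"
      then show ?thesis using cm by (simp del: of_nat_sum)
    next
      assume "\<omega> \<in> space M" "\<forall>m. \<exists>n\<ge>m. P n \<omega>" "k = 0"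
      then have "infinite {n. P n \<omega>}" using fin by (meson not_le)
      then show ?thesis using \<open>\<omega> \<in> space M\<close> \<open>k = 0\<close> by simp
    qed
  qed
  show "(\<lambda>\<omega>. card {n. P n \<omega>}) -` {k} \<inter> space M \<in> sets M"
    unfolding eq by measurable
qed simp

lemma Ncount_measurable:
  assumes [measurable]: "\<And>i. E i \<in> borel_measurable M" "T \<in> borel_measurable M"
  shows "(\<lambda>\<omega>. Ncount E (T \<omega>) \<omega>) \<in> measurable M (count_space UNIV)"
  unfolding Ncount_def by (rule card_pred_measurable) measurable

lemma surplus_measurable:
  assumes [measurable]: "\<And>i. E i \<in> borel_measurable M" "\<And>i. U i \<in> borel_measurable M" "T \<in> borel_measurable M"
  shows "(\<lambda>\<omega>. surplus p E U x (T \<omega>) \<omega>) \<in> borel_measurable M"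
proof -
  have "(\<lambda>\<omega>. (\<lambda>k \<omega>. \<Sum>i<k. U i \<omega>) (Ncount E (T \<omega>) \<omega>) \<omega>) \<in> borel_measurable M"
    by (rule measurable_compose_countable[OF _ Ncount_measurable]) auto
  then show ?thesis unfolding surplus_def by measurable
qed


lemma int_upper:
  fixes g :: "real \<Rightarrow> real"
  assumes "mono_on {0..} g" "0 \<le> t" "t \<le> s" "\<And>u. u \<ge> 0 \<Longrightarrow> g u \<le> c"
  shows "integral {0..s} g - integral {0..t} g \<le> c * (s - t)"
proof -
  have i: "g integrable_on {0..s}" "g integrable_on {t..s}" using mono_int_on assms by auto
  have "integral {0..t} g + integral {t..s} g = integral {0..s} g"
    using Henstock_Kurzweil_Integration.integral_combine[OF assms(2) assms(3) i(1)] .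
  moreover have "integral {t..s} g \<le> integral {t..s} (\<lambda>_. c)"
  proof (rule integral_le[OF i(2) integrable_const_ivl])
    fix u assume "u \<in> {t..s}"
    then show "g u \<le> c" using assms(2) by (intro assms(4)) auto
  qed
  moreover have "integral {t..s} (\<lambda>_. c) = c * (s - t)" using assms(3) by simp
  ultimately show ?thesis by linarith
qed

lemma ruin_ge_iff:
  fixes Yc :: "real \<Rightarrow> 'w \<Rightarrow> real"
  shows "ereal a \<le> ruin_time Yc \<omega> \<longleftrightarrow> (\<forall>t. 0 \<le> t \<and> t < a \<longrightarrow> 0 \<le> Yc t \<omega>)"
proof (cases "\<exists>t\<ge>0. Yc t \<omega> < 0")
  case True
  let ?T = "{t. 0 \<le> t \<and> Yc t \<omega> < 0}"
  have ne: "?T \<noteq> {}" using True by blast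
  have bdd: "bdd_below ?T" by (rule bdd_belowI[of _ 0]) blast
  have rt: "ruin_time Yc \<omega> = ereal (Inf ?T)" unfolding ruin_time_def by (rule if_P[OF True])
  have "ereal a \<le> ruin_time Yc \<omega> \<longleftrightarrow> a \<le> Inf ?T" unfolding rt by (rule ereal_less_eq)
  also have "\<dots> \<longleftrightarrow> (\<forall>t\<in>?T. a \<le> t)" using ne bdd by (rule le_cInf_iff)
  also have "\<dots> \<longleftrightarrow> (\<forall>t. 0 \<le> t \<and> t < a \<longrightarrow> 0 \<le> Yc t \<omega>)"
  proof
    assume H: "\<forall>t\<in>?T. a \<le> t"
    show "\<forall>t. 0 \<le> t \<and> t < a \<longrightarrow> 0 \<le> Yc t \<omega>"
    proof (intro allI impI)
      fix t assume t: "0 \<le> t \<and> t < a"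
      show "0 \<le> Yc t \<omega>"
      proof (rule ccontr)
        assume "\<not> 0 \<le> Yc t \<omega>"
        then have "t \<in> ?T" using t by simp
        then show False using H t by force
      qed
    qed
  next
    assume H: "\<forall>t. 0 \<le> t \<and> t < a \<longrightarrow> 0 \<le> Yc t \<omega>"
    show "\<forall>t\<in>?T. a \<le> t"
    proof
      fix t assume t: "t \<in> ?T"
      show "a \<le> t"
      proof (rule ccontr)
        assume "\<not> a \<le> t"
        then have "0 \<le> Yc t \<omega>" using H t by simp
        then show False using t by simp
      qed
    qed
  qed
  finally show ?thesis .
next
  case False
  have rt: "ruin_time Yc \<omega> = \<infinity>" unfolding ruin_time_def by (rule if_not_P[OF False])
  show ?thesis unfolding rt using False by (simp add: not_less)
qed

lemma ruin_countable:
  fixes E U :: "nat \<Rightarrow> 'w \<Rightarrow> real" and D :: "real \<Rightarrow> 'w \<Rightarrow> real"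
  assumes U: "\<And>i. 0 \<le> U i \<omega>"
    and D: "mono_on {0..} (\<lambda>s. D s \<omega>)" "\<And>s. s \<ge> 0 \<Longrightarrow> 0 \<le> D s \<omega>" "\<And>s. s \<ge> 0 \<Longrightarrow> D s \<omega> \<le> cb"
    and p: "0 < p" and cb: "0 < cb"
  shows "(\<forall>t. 0 \<le> t \<and> t < a \<longrightarrow> 0 \<le> controlled (surplus p E U x) D t \<omega>) \<longleftrightarrow>
     ((\<forall>r\<in>\<rat>. 0 \<le> r \<and> r < a \<longrightarrow> 0 \<le> controlled (surplus p E U x) D r \<omega>) \<and>
      (\<forall>n. 0 \<le> arrival E n \<omega> \<and> arrival E n \<omega> < a \<longrightarrow> 0 \<le> controlled (surplus p E U x) D (arrival E n \<omega>) \<omega>))"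
    (is "?L \<longleftrightarrow> ?R1 \<and> ?R2")
proof
  assume ?L then show "?R1 \<and> ?R2" by auto
next
  assume R: "?R1 \<and> ?R2"
  have R1: "0 \<le> controlled (surplus p E U x) D r \<omega>" if "r \<in> \<rat>" "0 \<le> r" "r < a" for r
    using R that by blast
  have R2: "0 \<le> controlled (surplus p E U x) D (arrival E n \<omega>) \<omega>"
    if "0 \<le> arrival E n \<omega>" "arrival E n \<omega> < a" for n
    using R that by blast
  define A where "A s = integral {0..s} (\<lambda>u. D u \<omega>)" for s
  define S where "S s = (\<Sum>i<Ncount E s \<omega>. U i \<omega>)" for s
  have Yc: "controlled (surplus p E U x) D s \<omega> = x + p * s - S s - A s" for s
    by (simp add: controlled_def surplus_def S_def A_def)
  have S0: "0 \<le> S s" for s unfolding S_def using U by (simp add: sum_nonneg)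
  have Al: "0 \<le> A v - A u" if "0 \<le> u" "u \<le> v" for u v
    using int_lower[OF D(1) that D(2)] by (simp add: A_def)
  have Au: "A v - A u \<le> cb * (v - u)" if "0 \<le> u" "u \<le> v" for u v
    using int_upper[OF D(1) that D(3)] by (simp add: A_def)
  show ?L
  proof (intro allI impI, rule ccontr)
    fix t assume t: "0 \<le> t \<and> t < a" and neg: "\<not> 0 \<le> controlled (surplus p E U x) D t \<omega>"
    define \<eta> where "\<eta> = - controlled (surplus p E U x) D t \<omega>"
    have \<eta>: "\<eta> > 0" using neg by (simp add: \<eta>_def)
    have tQ: "t \<notin> \<rat>" using R1[of t] t neg by blast
    have tA: "\<forall>n. arrival E n \<omega> \<noteq> t"
    proof
      fix n show "arrival E n \<omega> \<noteq> t"
      proof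
        assume "arrival E n \<omega> = t"
        then show False using R2[of n] t neg by simp
      qed
    qed
    show False
    proof (cases "finite {n. arrival E n \<omega> \<le> t}")
      case False
      then have St: "S t = 0" by (simp add: S_def Ncount_def)
      obtain r where r: "r \<in> \<rat>" "t < r" "r < min a (t + \<eta>/p)"
        using Rats_dense_in_real[of t "min a (t + \<eta>/p)"] t \<eta> p by auto
      have "controlled (surplus p E U x) D r \<omega> = x + p * r - S r - A r" by (rule Yc)
      also have "\<dots> \<le> x + p * t - A t + p * (r - t)" using S0[of r] Al[of t r] t r
        by (simp add: algebra_simps)
      also have "\<dots> = - \<eta> + p * (r - t)" using St by (simp add: \<eta>_def Yc)
      also have "p * (r - t) < \<eta>" using r p by (simp add: field_simps)
      then have "- \<eta> + p * (r - t) < 0" by simp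
      finally have "controlled (surplus p E U x) D r \<omega> < 0" .
      then show False using R1[of r] r t by simp
    next
      case True
      define F where "F = {n. arrival E n \<omega> \<le> t}"
      define l where "l = Max (insert 0 ((\<lambda>n. arrival E n \<omega>) ` F))"
      have fin: "finite (insert 0 ((\<lambda>n. arrival E n \<omega>) ` F))" using True by (simp add: F_def)
      have t0: "0 < t" using t tQ by (metis Rats_0 order_le_less)
      have lt: "l < t" unfolding l_def using fin t0 tA
        by (subst Max_less_iff) (auto simp: F_def order_le_less)
      have l0: "0 \<le> l" unfolding l_def using fin by (intro Max_ge) auto
      have Fs: "{n. arrival E n \<omega> \<le> s} = F" if "l < s" "s \<le> t" for s
      proof
        show "{n. arrival E n \<omega> \<le> s} \<subseteq> F" using that by (auto simp: F_def)
        show "F \<subseteq> {n. arrival E n \<omega> \<le> s}"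
        proof
          fix n assume "n \<in> F"
          then have "arrival E n \<omega> \<le> l" unfolding l_def using fin by (intro Max_ge) auto
          then show "n \<in> {n. arrival E n \<omega> \<le> s}" using that by auto
        qed
      qed
      obtain r where r: "r \<in> \<rat>" "max l (t - \<eta>/cb) < r" "r < t"
        using Rats_dense_in_real[of "max l (t - \<eta>/cb)" t] lt \<eta> cb by auto
      have Sr: "S r = S t" using Fs[of r] Fs[of t] r lt by (simp add: S_def Ncount_def)
      have r0: "0 \<le> r" using r l0 by simp
      have "controlled (surplus p E U x) D r \<omega> = x + p * r - S r - A r" by (rule Yc)
      also have "\<dots> = (x + p * t - S t - A t) - p * (t - r) + (A t - A r)" using Sr by (simp add: algebra_simps)
      also have "\<dots> \<le> - \<eta> + cb * (t - r)"
      proof -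
        have "0 \<le> p * (t - r)" using r p by simp
        moreover have "\<eta> = - (x + p * t - S t - A t)" by (simp add: \<eta>_def Yc)
        ultimately show ?thesis using Au[of r t] r0 r by linarith
      qed
      also have "cb * (t - r) < \<eta>" using r cb by (simp add: field_simps)
      then have "- \<eta> + cb * (t - r) < 0" by simp
      finally have "controlled (surplus p E U x) D r \<omega> < 0" .
      then show False using R1[of r] r r0 t by simp
    qed
  qed
qed


context
  fixes M :: "'w measure" and E U :: "nat \<Rightarrow> 'w \<Rightarrow> real" and D :: "real \<Rightarrow> 'w \<Rightarrow> real"
    and H :: "'w \<Rightarrow> real \<Rightarrow> real" and p x q cb :: real
  assumes EU[measurable]: "\<And>i. E i \<in> borel_measurable M" "\<And>i. U i \<in> borel_measurable M"
    and Upos: "\<And>i \<omega>. \<omega> \<in> space M \<Longrightarrow> 0 \<le> U i \<omega>"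
    and Dm: "\<And>\<omega>. \<omega> \<in> space M \<Longrightarrow> mono_on {0..} (\<lambda>s. D s \<omega>)"
    and Db: "\<And>\<omega> s. \<omega> \<in> space M \<Longrightarrow> s \<ge> 0 \<Longrightarrow> 0 \<le> D s \<omega> \<and> D s \<omega> \<le> cb"
    and Hm[measurable]: "(\<lambda>(\<omega>, s). H \<omega> s) \<in> borel_measurable (M \<Otimes>\<^sub>M lborel)"
    and DH: "\<And>\<omega> s. \<omega> \<in> space M \<Longrightarrow> s \<ge> 0 \<Longrightarrow> D s \<omega> = H \<omega> s"
    and p: "0 < p" and cb: "0 < cb"
begin

lemma Aint_eq:
  assumes \<omega>: "\<omega> \<in> space M"
  shows "integral {0..T} (\<lambda>s. D s \<omega>) = (LINT s|lborel. indicator {0..T} s * H \<omega> s)"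
proof (cases "0 \<le> T")
  case False
  then show ?thesis by (simp add: indicator_def)
next
  case True
  have Hs[measurable]: "H \<omega> \<in> borel_measurable lborel"
    using measurable_Pair2[OF Hm \<omega>] by simp
  have si: "set_integrable lborel {0..T} (\<lambda>s. D s \<omega>)"
    unfolding set_integrable_def
  proof (rule Bochner_Integration.integrable_bound[where f="\<lambda>s. cb * indicator {0..T} s"])
    show "integrable lborel (\<lambda>s. cb * indicator {0..T} s)"
      by (intro integrable_mult_right integrable_real_indicator) (use True in auto)
    have "(\<lambda>s. indicator {0..T} s *\<^sub>R D s \<omega>) = (\<lambda>s. indicator {0..T} s * H \<omega> s)"
      using DH[OF \<omega>] by (auto simp: indicator_def fun_eq_iff)
    then show "(\<lambda>s. indicator {0..T} s *\<^sub>R D s \<omega>) \<in> borel_measurable lborel" by simp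
    show "AE s in lborel. norm (indicator {0..T} s *\<^sub>R D s \<omega>) \<le> norm (cb * indicator {0..T} s)"
      using Db[OF \<omega>] cb by (auto simp: indicator_def)
  qed
  have "integral {0..T} (\<lambda>s. D s \<omega>) = (LINT s:{0..T}|lborel. D s \<omega>)"
    using set_borel_integral_eq_integral(2)[OF si] by simp
  also have "\<dots> = (LINT s|lborel. indicator {0..T} s * H \<omega> s)"
    unfolding set_lebesgue_integral_def
    by (rule Bochner_Integration.integral_cong) (use DH[OF \<omega>] in \<open>auto simp: indicator_def\<close>)
  finally show ?thesis .
qed

lemma Aint_measurable:
  assumes [measurable]: "T \<in> borel_measurable M"
  shows "(\<lambda>\<omega>. integral {0..T \<omega>} (\<lambda>s. D s \<omega>)) \<in> borel_measurable M"
proof -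
  have "(\<lambda>\<omega>. LINT s|lborel. indicator {0..T \<omega>} s * H \<omega> s) \<in> borel_measurable M"
  proof (rule lborel.borel_measurable_lebesgue_integral)
    have "(\<lambda>(\<omega>, s). indicator {0..T \<omega>} s * H \<omega> s) = (\<lambda>(\<omega>, s). (if 0 \<le> s \<and> s \<le> T \<omega> then 1 else 0) * H \<omega> s)"
      by (auto simp: indicator_def fun_eq_iff)
    also have "\<dots> \<in> borel_measurable (M \<Otimes>\<^sub>M lborel)" by measurable
    finally show "(\<lambda>(\<omega>, s). indicator {0..T \<omega>} s * H \<omega> s) \<in> borel_measurable (M \<Otimes>\<^sub>M lborel)" .
  qed
  then show ?thesis by (rule measurable_cong[THEN iffD1, rotated]) (simp add: Aint_eq)
qed

lemma Yc_measurable: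
  assumes [measurable]: "T \<in> borel_measurable M"
  shows "(\<lambda>\<omega>. controlled (surplus p E U x) D (T \<omega>) \<omega>) \<in> borel_measurable M"
proof -
  have [measurable]: "(\<lambda>\<omega>. surplus p E U x (T \<omega>) \<omega>) \<in> borel_measurable M"
    by (rule surplus_measurable) measurable
  have [measurable]: "(\<lambda>\<omega>. integral {0..T \<omega>} (\<lambda>s. D s \<omega>)) \<in> borel_measurable M"
    by (rule Aint_measurable) measurable
  show ?thesis unfolding controlled_def by measurable
qed

lemma ruin_measurable:
  "(\<lambda>\<omega>. ruin_time (controlled (surplus p E U x) D) \<omega>) \<in> borel_measurable M"
proof -
  let ?Y = "controlled (surplus p E U x) D"
  have Yq[measurable]: "(\<lambda>\<omega>. ?Y (real_of_rat k) \<omega>) \<in> borel_measurable M" for k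
    by (rule Yc_measurable) simp
  have Yn[measurable]: "(\<lambda>\<omega>. ?Y (arrival E n \<omega>) \<omega>) \<in> borel_measurable M" for n
    by (rule Yc_measurable) measurable
  have ge: "{\<omega>\<in>space M. ereal a \<le> ruin_time ?Y \<omega>} \<in> sets M" for a
  proof -
    have "{\<omega>\<in>space M. ereal a \<le> ruin_time ?Y \<omega>} =
      {\<omega>\<in>space M. (\<forall>k::rat. 0 \<le> real_of_rat k \<and> real_of_rat k < a \<longrightarrow> 0 \<le> ?Y (real_of_rat k) \<omega>) \<and>
        (\<forall>n. 0 \<le> arrival E n \<omega> \<and> arrival E n \<omega> < a \<longrightarrow> 0 \<le> ?Y (arrival E n \<omega>) \<omega>)}"
    proof (intro Collect_cong conj_cong refl)
      fix \<omega> assume \<omega>: "\<omega> \<in> space M"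
      have "ereal a \<le> ruin_time ?Y \<omega> \<longleftrightarrow> (\<forall>t. 0 \<le> t \<and> t < a \<longrightarrow> 0 \<le> ?Y t \<omega>)"
        by (rule ruin_ge_iff)
      also have "\<dots> \<longleftrightarrow> (\<forall>r\<in>\<rat>. 0 \<le> r \<and> r < a \<longrightarrow> 0 \<le> ?Y r \<omega>) \<and>
        (\<forall>n. 0 \<le> arrival E n \<omega> \<and> arrival E n \<omega> < a \<longrightarrow> 0 \<le> ?Y (arrival E n \<omega>) \<omega>)"
        by (rule ruin_countable[where cb=cb]) (use Upos[OF \<omega>] Dm[OF \<omega>] Db[OF \<omega>] p cb in auto)
      also have "(\<forall>r\<in>\<rat>. 0 \<le> r \<and> r < a \<longrightarrow> 0 \<le> ?Y r \<omega>) \<longleftrightarrow>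
          (\<forall>k::rat. 0 \<le> real_of_rat k \<and> real_of_rat k < a \<longrightarrow> 0 \<le> ?Y (real_of_rat k) \<omega>)"
        by (auto simp: Rats_def)
      finally show "ereal a \<le> ruin_time ?Y \<omega> \<longleftrightarrow> (\<forall>k::rat. 0 \<le> real_of_rat k \<and> real_of_rat k < a \<longrightarrow> 0 \<le> ?Y (real_of_rat k) \<omega>) \<and>
        (\<forall>n. 0 \<le> arrival E n \<omega> \<and> arrival E n \<omega> < a \<longrightarrow> 0 \<le> ?Y (arrival E n \<omega>) \<omega>)" .
    qed
    also have "\<dots> \<in> sets M" by measurable
    finally show ?thesis .
  qed
  show ?thesis
  proof (rule borel_measurableI_ge)
    fix y :: ereal
    show "{\<omega>\<in>space M. y \<le> ruin_time ?Y \<omega>} \<in> sets M"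
    proof (cases y)
      case (real r) then show ?thesis using ge by simp
    next
      case PInf
      have "{\<omega>\<in>space M. y \<le> ruin_time ?Y \<omega>} = (\<Inter>k::nat. {\<omega>\<in>space M. ereal (real k) \<le> ruin_time ?Y \<omega>}) \<inter> space M"
      proof -
        have h: "\<infinity> \<le> z \<longleftrightarrow> (\<forall>k::nat. ereal (real k) \<le> z)" for z :: ereal
        proof (cases z)
          case (real r)
          obtain k :: nat where "r < real k" using reals_Archimedean2 by blast
          then show ?thesis using real by (auto simp: not_le)
        qed auto
        have "y \<le> ruin_time ?Y \<omega> \<longleftrightarrow> (\<forall>k::nat. ereal (real k) \<le> ruin_time ?Y \<omega>)" for \<omega>
          by (simp only: PInf h)
        then show ?thesis by blast
      qed
      also have "\<dots> \<in> sets M" using ge by auto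
      finally show ?thesis .
    next
      case MInf then show ?thesis by simp
    qed
  qed
qed

lemma payoff_measurable:
  "(\<lambda>\<omega>. payoff q (surplus p E U x) D \<omega>) \<in> borel_measurable M"
proof -
  let ?Y = "controlled (surplus p E U x) D"
  have [measurable]: "(\<lambda>\<omega>. ruin_time ?Y \<omega>) \<in> borel_measurable M" by (rule ruin_measurable)
  have "(\<lambda>\<omega>. LINT s|lborel. (if 0 \<le> s \<and> ereal s < ruin_time ?Y \<omega> then 1 else 0) * (exp (- q * s) * H \<omega> s))
      \<in> borel_measurable M"
    by (rule lborel.borel_measurable_lebesgue_integral) measurable
  then show ?thesis
  proof (rule measurable_cong[THEN iffD1, rotated])
    fix \<omega> assume \<omega>: "\<omega> \<in> space M"
    show "(LINT s|lborel. (if 0 \<le> s \<and> ereal s < ruin_time ?Y \<omega> then 1 else 0) * (exp (- q * s) * H \<omega> s))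
        = payoff q (surplus p E U x) D \<omega>"
      unfolding payoff_def
      by (rule Bochner_Integration.integral_cong) (use DH[OF \<omega>] in \<open>auto simp: indicator_def\<close>)
  qed
qed

end


lemma arrival_mono:
  assumes "\<And>i. 0 \<le> E i \<omega>" "n \<le> m"
  shows "arrival E n \<omega> \<le> arrival E m \<omega>"
  unfolding arrival_def using assms by (intro sum_mono2) auto

lemma (in prob_space) arrivals_finite:
  fixes E U :: "nat \<Rightarrow> 'a \<Rightarrow> real"
  assumes dist: "\<And>n. distributed M lborel (E n) (exponential_density \<beta>)" and \<beta>: "0 < \<beta>"
    and ind: "indep_vars (\<lambda>_. borel) (\<lambda>i. case i of Inl n \<Rightarrow> E n | Inr n \<Rightarrow> U n) UNIV"
  shows "AE \<omega> in M. \<forall>t. finite {n. arrival E n \<omega> \<le> t}"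
proof -
  have Em[measurable]: "E n \<in> borel_measurable M" for n
    using distributed_measurable[OF dist[of n]] by simp
  have pos: "AE \<omega> in M. \<forall>i. 0 \<le> E i \<omega>"
  proof (subst AE_all_countable, rule allI)
    fix i
    have "prob {\<omega>\<in>space M. E i \<omega> \<le> 0} = 1 - exp (- 0 * \<beta>)"
      by (rule exponential_distributedD_le[OF dist[of i] order_refl \<beta>])
    then have p0: "prob {\<omega>\<in>space M. E i \<omega> \<le> 0} = 0" by simp
    have "AE \<omega> in M. \<not> E i \<omega> \<le> 0"
      by (subst AE_iff_measurable[OF _ refl]) (use p0 in \<open>auto simp: emeasure_eq_measure\<close>)
    then show "AE \<omega> in M. 0 \<le> E i \<omega>" by eventually_elim auto
  qed
  define \<rho> where "\<rho> = 1 - (1 - exp (-1)) * exp (- \<beta>)"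
  have \<rho>0: "0 \<le> \<rho>" "\<rho> < 1"
  proof -
    have a: "0 < 1 - exp (-1::real)" "1 - exp (-1::real) \<le> 1" by auto
    have b: "0 < exp (- \<beta>)" "exp (- \<beta>) \<le> 1" using \<beta> by auto
    have "(1 - exp (-1)) * exp (- \<beta>) \<le> 1" using a b by (intro mult_le_one) auto
    then show "0 \<le> \<rho>" by (simp add: \<rho>_def)
    have "0 < (1 - exp (-1)) * exp (- \<beta>)" using a b by simp
    then show "\<rho> < 1" by (simp add: \<rho>_def)
  qed
  define X where "X = (\<lambda>i. case i of Inl n \<Rightarrow> E n | Inr n \<Rightarrow> U n)"
  define Z where "Z i \<omega> = exp (- max (X i \<omega>) 0)" for i \<omega>
  have Zb: "0 \<le> Z i \<omega>" "Z i \<omega> \<le> 1" for i \<omega> by (auto simp: Z_def)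
  have ZE: "Z (Inl j) = (\<lambda>\<omega>. exp (- max (E j \<omega>) 0))" for j by (auto simp: Z_def X_def)
  have Zm[measurable]: "Z (Inl j) \<in> borel_measurable M" for j unfolding ZE by measurable
  have Zint: "integrable M (Z (Inl j))" for j
    by (rule integrable_const_bound[where B=1]) (use Zb in auto)
  have EZ: "expectation (Z (Inl j)) \<le> \<rho>" for j
  proof -
    have ib: "integrable M (\<lambda>\<omega>. 1 - (1 - exp (-1)) * indicator {\<omega>\<in>space M. 1 < E j \<omega>} \<omega> :: real)"
      by (intro Bochner_Integration.integrable_diff integrable_mult_right integrable_real_indicator) (auto simp: emeasure_eq_measure)
    have "expectation (Z (Inl j)) \<le> expectation (\<lambda>\<omega>. 1 - (1 - exp (-1)) * indicator {\<omega>\<in>space M. 1 < E j \<omega>} \<omega>)"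
    proof (rule integral_mono[OF Zint ib])
      fix \<omega> assume \<omega>: "\<omega> \<in> space M"
      show "Z (Inl j) \<omega> \<le> 1 - (1 - exp (-1)) * indicator {\<omega>\<in>space M. 1 < E j \<omega>} \<omega>"
      proof (cases "1 < E j \<omega>")
        case True
        then have "exp (- max (E j \<omega>) 0) \<le> exp (-1)" by simp
        then show ?thesis using True \<omega> by (simp add: ZE)
      next
        case False
        then show ?thesis using Zb[of "Inl j" \<omega>] by (simp add: indicator_def)
      qed
    qed
    also have "\<dots> = 1 - (1 - exp (-1)) * prob {\<omega>\<in>space M. 1 < E j \<omega>}"
    proof -
      have i1: "integrable M (\<lambda>\<omega>. (1::real))" by simp
      have i2: "integrable M (\<lambda>\<omega>. (1 - exp (-1)) * indicator {\<omega>\<in>space M. 1 < E j \<omega>} \<omega> :: real)"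
        by (intro integrable_mult_right integrable_real_indicator) (auto simp: emeasure_eq_measure)
      show ?thesis by (subst Bochner_Integration.integral_diff[OF i1 i2]) (simp add: prob_space)
    qed
    also have "prob {\<omega>\<in>space M. 1 < E j \<omega>} = exp (- 1 * \<beta>)"
      by (rule exponential_distributedD_gt[OF dist[of j] _ \<beta>]) simp
    finally show ?thesis by (simp add: \<rho>_def)
  qed
  have indZ: "indep_vars (\<lambda>_. borel) Z (Inl ` {..n})" for n
  proof -
    have "indep_vars (\<lambda>_. borel) X (Inl ` {..n})"
      using indep_vars_subset[OF ind[folded X_def]] by auto
    then have "indep_vars (\<lambda>_. borel) (\<lambda>i \<omega>. (\<lambda>v. exp (- max v 0)) (X i \<omega>)) (Inl ` {..n})"
      by (rule indep_vars_compose2) measurable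
    then show ?thesis by (simp add: Z_def[abs_def])
  qed
  have prodE: "expectation (\<lambda>\<omega>. \<Prod>j\<le>n. exp (- max (E j \<omega>) 0)) \<le> \<rho> ^ Suc n" for n
  proof -
    have eqp: "(\<Prod>j\<le>n. exp (- max (E j \<omega>) 0)) = (\<Prod>i\<in>Inl ` {..n}. Z i \<omega>)" for \<omega>
      by (subst prod.reindex) (auto simp: ZE inj_on_def)
    have "expectation (\<lambda>\<omega>. \<Prod>i\<in>Inl ` {..n}. Z i \<omega>) = (\<Prod>i\<in>Inl ` {..n}. expectation (Z i))"
      by (rule indep_vars_lebesgue_integral[OF _ indZ]) (auto intro: Zint)
    also have "\<dots> = (\<Prod>j\<le>n. expectation (Z (Inl j)))"
      by (subst prod.reindex) (auto simp: inj_on_def)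
    also have "\<dots> \<le> (\<Prod>j\<le>n. \<rho>)"
      by (intro prod_mono) (use EZ Zb in \<open>auto intro: integral_nonneg_AE\<close>)
    finally show ?thesis by (simp add: eqp)
  qed
  have null: "AE \<omega> in M. \<not> (\<forall>n. arrival E n \<omega> \<le> real k)" for k :: nat
  proof -
    define A where "A = {\<omega>\<in>space M. \<forall>n. arrival E n \<omega> \<le> real k}"
    have Am[measurable]: "A \<in> sets M" unfolding A_def arrival_def by measurable
    have bnd: "prob A \<le> exp (real k) * \<rho> ^ Suc n" for n
    proof -
      have i1: "integrable M (\<lambda>\<omega>. exp (real k) * (\<Prod>j\<le>n. exp (- max (E j \<omega>) 0)))"
      proof (rule integrable_const_bound[where B="exp (real k)"])
        show "AE \<omega> in M. norm (exp (real k) * (\<Prod>j\<le>n. exp (- max (E j \<omega>) 0))) \<le> exp (real k)"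
        proof (rule AE_I2)
          fix \<omega>
          have a: "(\<Prod>j\<le>n. exp (- max (E j \<omega>) 0)) \<le> 1" by (rule prod_le_1) auto
          have b: "0 \<le> (\<Prod>j\<le>n. exp (- max (E j \<omega>) 0))" by (rule prod_nonneg) auto
          show "norm (exp (real k) * (\<Prod>j\<le>n. exp (- max (E j \<omega>) 0))) \<le> exp (real k)"
            using a b by (simp add: abs_mult mult_left_le)
        qed
      qed measurable
      have "prob A = expectation (indicator A :: 'a \<Rightarrow> real)" using Am by simp
      also have "\<dots> \<le> expectation (\<lambda>\<omega>. exp (real k) * (\<Prod>j\<le>n. exp (- max (E j \<omega>) 0)))"
      proof (rule integral_mono_AE)
        show "integrable M (indicator A :: 'a \<Rightarrow> real)" using Am by (intro integrable_real_indicator) (auto simp: emeasure_eq_measure)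
        show "integrable M (\<lambda>\<omega>. exp (real k) * (\<Prod>j\<le>n. exp (- max (E j \<omega>) 0)))" by (fact i1)
        show "AE \<omega> in M. indicator A \<omega> \<le> exp (real k) * (\<Prod>j\<le>n. exp (- max (E j \<omega>) 0))"
          using pos
        proof eventually_elim
          case (elim \<omega>)
          show ?case
          proof (cases "\<omega> \<in> A")
            case True
            have "(\<Prod>j\<le>n. exp (- max (E j \<omega>) 0)) = exp (- arrival E n \<omega>)"
            proof -
              have "max (E j \<omega>) 0 = E j \<omega>" for j using elim by simp
              then show ?thesis by (simp add: arrival_def exp_sum[symmetric] sum_negf)
            qed
            moreover have "exp (real k) * exp (- arrival E n \<omega>) = exp (real k - arrival E n \<omega>)"
              by (simp add: exp_add[symmetric])
            moreover have "1 \<le> exp (real k - arrival E n \<omega>)" using True by (simp add: A_def)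
            ultimately have "1 \<le> exp (real k) * (\<Prod>j\<le>n. exp (- max (E j \<omega>) 0))"
              by simp
            then show ?thesis using True by simp
          next
            case False
            then show ?thesis by (simp add: prod_nonneg)
          qed
        qed
      qed
      also have "\<dots> = exp (real k) * expectation (\<lambda>\<omega>. \<Prod>j\<le>n. exp (- max (E j \<omega>) 0))" by simp
      also have "\<dots> \<le> exp (real k) * \<rho> ^ Suc n" using prodE[of n] by simp
      finally show ?thesis .
    qed
    have lim: "(\<lambda>n. exp (real k) * \<rho> ^ Suc n) \<longlonglongrightarrow> 0"
    proof -
      have "(\<lambda>n. \<rho> ^ n) \<longlonglongrightarrow> 0" using \<rho>0 by (intro LIMSEQ_power_zero) simp
      then have "(\<lambda>n. \<rho> ^ Suc n) \<longlonglongrightarrow> 0" by (rule LIMSEQ_Suc)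
      then show ?thesis by (rule tendsto_mult_right_zero)
    qed
    have "prob A \<le> 0" by (rule LIMSEQ_le_const[OF lim]) (use bnd in auto)
    then have "prob A = 0" using measure_nonneg[of M A] by linarith
    then show ?thesis
      by (subst AE_iff_measurable[OF Am]) (auto simp: A_def emeasure_eq_measure)
  qed
  have "AE \<omega> in M. \<forall>k::nat. \<not> (\<forall>n. arrival E n \<omega> \<le> real k)"
    using null by (subst AE_all_countable) auto
  with pos show ?thesis
  proof eventually_elim
    case (elim \<omega>)
    show ?case
    proof
      fix t :: real
      obtain k :: nat where k: "t \<le> real k" using real_arch_simple by blast
      obtain n0 where n0: "\<not> arrival E n0 \<omega> \<le> real k" using elim by blast
      have "{n. arrival E n \<omega> \<le> t} \<subseteq> {..<n0}"
      proof
        fix n assume n: "n \<in> {n. arrival E n \<omega> \<le> t}"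
        show "n \<in> {..<n0}"
        proof (rule ccontr)
          assume "n \<notin> {..<n0}"
          then have "arrival E n0 \<omega> \<le> arrival E n \<omega>" using elim by (intro arrival_mono) auto
          then show False using n n0 k by auto
        qed
      qed
      then show "finite {n. arrival E n \<omega> \<le> t}" by (rule finite_subset) auto
    qed
  qed
qed


lemma gen_pow: "{Y s -` A \<inter> space M | s A. 0 \<le> s \<and> s \<le> t \<and> A \<in> sets borel}
      \<union> {N. N \<subseteq> space M \<and> (\<exists>A\<in>null_sets M. N \<subseteq> A)} \<subseteq> Pow (space M)"
  by auto

lemma Fl_Int:
  assumes "a \<in> nat_filtration M Y t" "b \<in> nat_filtration M Y t"
  shows "a \<inter> b \<in> nat_filtration M Y t"
proof -
  have sa: "a \<subseteq> space M" "b \<subseteq> space M"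
    using sigma_sets_into_sp[OF gen_pow] assms unfolding nat_filtration_def by blast+
  have "space M - ((space M - a) \<union> (space M - b)) \<in> nat_filtration M Y t"
    using assms unfolding nat_filtration_def by (intro sigma_sets.Compl sigma_sets_Un) auto
  moreover have "space M - ((space M - a) \<union> (space M - b)) = a \<inter> b" using sa by blast
  ultimately show ?thesis by simp
qed

lemma Fl_null:
  assumes "Z \<in> null_sets M"
  shows "Z \<in> nat_filtration M Y t"
  unfolding nat_filtration_def
  using assms null_sets.sets_into_space by (intro sigma_sets.Basic) blast

lemma Fl_space: "space M \<in> nat_filtration M Y t"
  unfolding nat_filtration_def by (rule sigma_sets_top)

lemma Fl_Compl: "a \<in> nat_filtration M Y t \<Longrightarrow> space M - a \<in> nat_filtration M Y t"
  unfolding nat_filtration_def by (rule sigma_sets.Compl)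

lemma Fl_completion:
  fixes Y :: "real \<Rightarrow> 'w \<Rightarrow> real" and M :: "'w measure"
  assumes Ym: "\<And>s. Y s \<in> borel_measurable M"
  shows "nat_filtration M Y t \<subseteq> sets (completion M)"
  unfolding nat_filtration_def
proof -
  have "sigma_sets (space (completion M)) ({Y s -` A \<inter> space M | s A. 0 \<le> s \<and> s \<le> t \<and> A \<in> sets borel}
      \<union> {N. N \<subseteq> space M \<and> (\<exists>A\<in>null_sets M. N \<subseteq> A)}) \<subseteq> sets (completion M)"
  proof (rule sets.sigma_sets_subset, safe)
    fix s and A :: "real set" assume "A \<in> sets borel"
    then have "Y s -` A \<inter> space M \<in> sets M" using measurable_sets[OF Ym] by blast
    then show "Y s -` A \<inter> space M \<in> sets (completion M)" by simp
  next
    fix N A assume "A \<in> null_sets M" "N \<subseteq> A"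
    then show "N \<in> sets (completion M)" by (rule sets_completionI_sub)
  qed
  then show "sigma_sets (space M) ({Y s -` A \<inter> space M | s A. 0 \<le> s \<and> s \<le> t \<and> A \<in> sets borel}
      \<union> {N. N \<subseteq> space M \<and> (\<exists>A\<in>null_sets M. N \<subseteq> A)}) \<subseteq> sets (completion M)" by simp
qed

lemma adapted_completion:
  fixes Y C :: "real \<Rightarrow> 'w \<Rightarrow> real" and M :: "'w measure"
  assumes Ym: "\<And>s. Y s \<in> borel_measurable M" and ad: "adapted_to M (nat_filtration M Y) C" and t: "0 \<le> t"
  shows "C t \<in> borel_measurable (completion M)"
proof (rule measurableI)
  fix A :: "real set" assume "A \<in> sets borel"
  then have "C t -` A \<inter> space M \<in> nat_filtration M Y t" using ad t unfolding adapted_to_def by blast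
  then show "C t -` A \<inter> space (completion M) \<in> sets (completion M)"
    using Fl_completion[where Y=Y and M=M and t=t, OF Ym] by auto
qed simp

lemma adm_const:
  assumes "c \<le> cbar"
  shows "admissible M (nat_filtration M Y) c cbar (\<lambda>t \<omega>. c)"
proof -
  have "(\<lambda>\<omega>. c) -` A \<inter> space M \<in> nat_filtration M Y t" for A t
  proof (cases "c \<in> A")
    case True
    then have "(\<lambda>\<omega>. c) -` A \<inter> space M = space M" by auto
    then show ?thesis using Fl_space by simp
  next
    case False
    then have "(\<lambda>\<omega>. c) -` A \<inter> space M = {}" by auto
    then show ?thesis unfolding nat_filtration_def by (simp add: sigma_sets.Empty)
  qed
  then show ?thesis using assms
    by (auto simp: admissible_def adapted_to_def mono_on_def intro: continuous_const)
qed


lemma Fl_Un: "a \<in> nat_filtration M Y t \<Longrightarrow> b \<in> nat_filtration M Y t \<Longrightarrow> a \<union> b \<in> nat_filtration M Y t"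
  unfolding nat_filtration_def by (rule sigma_sets_Un)

lemma Fl_empty: "{} \<in> nat_filtration M Y t"
  unfolding nat_filtration_def by (rule sigma_sets.Empty)

lemma surplus_le: "(\<And>i. 0 \<le> U i \<omega>) \<Longrightarrow> surplus p E U x t \<omega> \<le> x + p * t"
  unfolding surplus_def by (simp add: sum_nonneg)

lemma surplus_mono:
  assumes U: "\<And>i. 0 \<le> U i \<omega>" and fin: "\<forall>t. finite {n. arrival E n \<omega> \<le> t}" and ts: "t \<le> s"
  shows "surplus p E U x s \<omega> \<le> surplus p E U x t \<omega> + p * (s - t)"
proof -
  have "Ncount E t \<omega> \<le> Ncount E s \<omega>" unfolding Ncount_def
    using fin ts by (intro card_mono) auto
  then have "(\<Sum>i<Ncount E t \<omega>. U i \<omega>) \<le> (\<Sum>i<Ncount E s \<omega>. U i \<omega>)"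
    using U by (intro sum_mono2) auto
  then show ?thesis unfolding surplus_def by (simp add: algebra_simps)
qed

lemma rn_props:
  fixes s :: real and n :: nat
  defines "r \<equiv> (real_of_int \<lfloor>real (Suc n) * s\<rfloor> + 1) / real (Suc n)"
  shows "r \<in> \<rat>" "s < r" "r \<le> s + inverse (real (Suc n))"
proof -
  show "r \<in> \<rat>" unfolding r_def by (intro Rats_divide Rats_add Rats_of_int Rats_of_nat Rats_1)
  have n: "0 < real (Suc n)" by simp
  have f1: "real (Suc n) * s < real_of_int \<lfloor>real (Suc n) * s\<rfloor> + 1" by linarith
  have f2: "real_of_int \<lfloor>real (Suc n) * s\<rfloor> \<le> real (Suc n) * s" by linarith
  show "s < r" unfolding r_def using f1 n by (simp add: field_simps)
  have "r \<le> (real (Suc n) * s + 1) / real (Suc n)" unfolding r_def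
    by (rule divide_right_mono) (use f2 in auto)
  also have "\<dots> = s + inverse (real (Suc n))" using n by (simp add: field_simps)
  finally show "r \<le> s + inverse (real (Suc n))" .
qed

lemma rn_lim:
  fixes s :: real
  shows "filterlim (\<lambda>n. (real_of_int \<lfloor>real (Suc n) * s\<rfloor> + 1) / real (Suc n)) (at_right s) sequentially"
proof (subst filterlim_at, intro conjI)
  show "\<forall>\<^sub>F n in sequentially. (real_of_int \<lfloor>real (Suc n) * s\<rfloor> + 1) / real (Suc n) \<in> {s<..} \<and>
      (real_of_int \<lfloor>real (Suc n) * s\<rfloor> + 1) / real (Suc n) \<noteq> s"
    using rn_props(2) by (intro always_eventually allI) (metis greaterThan_iff order_less_irrefl)
  show "((\<lambda>n. (real_of_int \<lfloor>real (Suc n) * s\<rfloor> + 1) / real (Suc n)) \<longlongrightarrow> s) sequentially"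
  proof (rule tendsto_sandwich[where f="\<lambda>_. s" and h="\<lambda>n. s + inverse (real (Suc n))"])
    show "\<forall>\<^sub>F n in sequentially. s \<le> (real_of_int \<lfloor>real (Suc n) * s\<rfloor> + 1) / real (Suc n)"
      using rn_props(2) by (intro always_eventually allI) (metis less_imp_le)
    show "\<forall>\<^sub>F n in sequentially. (real_of_int \<lfloor>real (Suc n) * s\<rfloor> + 1) / real (Suc n) \<le> s + inverse (real (Suc n))"
      using rn_props(3) by (intro always_eventually allI) blast
  qed (rule tendsto_const, rule LIMSEQ_inverse_real_of_nat_add)
qed

context
  fixes M :: "'w measure" and E U :: "nat \<Rightarrow> 'w \<Rightarrow> real" and p \<beta> q cbar x :: real
  assumes P: "prob_space M" and \<beta>: "\<beta> > 0" and p: "p > 0" and q: "q > 0"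
    and dist: "\<forall>n. distributed M lborel (E n) (exponential_density \<beta>)"
    and Um: "\<forall>n. U n \<in> borel_measurable M" and Upos: "\<forall>n. \<forall>\<omega>\<in>space M. U n \<omega> > 0"
    and ind: "prob_space.indep_vars M (\<lambda>_. borel) (\<lambda>i. case i of Inl n \<Rightarrow> E n | Inr n \<Rightarrow> U n) UNIV"
    and x: "0 \<le> x"
begin

lemma Em[measurable]: "E n \<in> borel_measurable M"
  using distributed_measurable[OF dist[rule_format, of n]] by simp

lemma Um'[measurable]: "U n \<in> borel_measurable M"
  using Um by simp

lemma Ym: "surplus p E U x s \<in> borel_measurable M"
  using surplus_measurable[where T="\<lambda>_. s", OF Em Um'] by simp

lemma U0: "\<omega> \<in> space M \<Longrightarrow> 0 \<le> U i \<omega>"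
  using Upos by (meson less_imp_le)

lemma J_bounds:
  assumes adm: "admissible M (nat_filtration M (surplus p E U x)) c cbar C" and pc: "p < c" and cc: "c \<le> cbar"
  shows "0 \<le> Jfun M q (surplus p E U x) C" "Jfun M q (surplus p E U x) C \<le> cbar * (x/(c-p))"
proof -
  interpret prob_space M by (rule P)
  have b: "0 \<le> payoff q (surplus p E U x) C \<omega> \<and> payoff q (surplus p E U x) C \<omega> \<le> cbar * (x/(c-p))"
    if \<omega>: "\<omega> \<in> space M" for \<omega>
  proof -
    have C: "mono_on {0..} (\<lambda>t. C t \<omega>)" "\<And>t. t \<ge> 0 \<Longrightarrow> c \<le> C t \<omega>" "\<And>t. t \<ge> 0 \<Longrightarrow> C t \<omega> \<le> cbar"
      using adm \<omega> unfolding admissible_def by auto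
    have "0 \<le> payoff q (surplus p E U x) C \<omega>"
      by (rule payoff_nonneg) (use C(2) pc p in \<open>smt (verit)\<close>)
    moreover have Xb: "\<And>t. t \<ge> 0 \<Longrightarrow> surplus p E U x t \<omega> \<le> x + p * t"
      by (rule surplus_le) (rule U0[OF \<omega>])
    moreover have "payoff q (surplus p E U x) C \<omega> \<le> cbar * (x/(c-p))"
      by (rule payoff_upper[where X="surplus p E U x" and C=C and \<omega>=\<omega>, OF Xb C pc x p q])
    ultimately show ?thesis by simp
  qed
  show "0 \<le> Jfun M q (surplus p E U x) C" unfolding Jfun_def
    using b by (intro integral_nonneg_AE AE_I2) auto
  show "Jfun M q (surplus p E U x) C \<le> cbar * (x/(c-p))"
  proof (cases "integrable M (payoff q (surplus p E U x) C)")
    case True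
    have "integral\<^sup>L M (payoff q (surplus p E U x) C) \<le> integral\<^sup>L M (\<lambda>_. cbar * (x/(c-p)))"
      by (rule integral_mono[OF True]) (use b in auto)
    also have "integral\<^sup>L M (\<lambda>_. cbar * (x/(c-p))) = cbar * (x/(c-p))" by (simp add: prob_space)
    finally show ?thesis unfolding Jfun_def .
  next
    case False
    have "0 \<le> cbar" using cc pc p by linarith
    then have "0 \<le> cbar * (x/(c-p))" using x pc by simp
    moreover have "Jfun M q (surplus p E U x) C = 0" unfolding Jfun_def using False by (rule not_integrable_integral_eq)
    ultimately show ?thesis by simp
  qed
qed


lemma compare:
  assumes adm: "admissible M (nat_filtration M (surplus p E U x)) c1 cbar C"
    and pc: "p < c1" "c1 \<le> c2" "c2 \<le> cbar"
  shows "\<exists>C2. admissible M (nat_filtration M (surplus p E U x)) c2 cbar C2 \<and>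
    Jfun M q (surplus p E U x) C \<le> Jfun M q (surplus p E U x) C2 + cbar * ((c2-c1)*x/(c1-p)^2)"
proof -
  interpret prob_space M by (rule P)
  let ?Y = "surplus p E U x"
  let ?F = "nat_filtration M ?Y"
  have ad: "adapted_to M ?F C" using adm by (simp add: admissible_def)
  have Cp: "\<And>t. t \<ge> 0 \<Longrightarrow> c1 \<le> C t \<omega> \<and> C t \<omega> \<le> cbar"
    "mono_on {0..} (\<lambda>t. C t \<omega>)"
    "\<And>t. t \<ge> 0 \<Longrightarrow> continuous (at_right t) (\<lambda>s. C s \<omega>)"
    "\<And>t. t > 0 \<Longrightarrow> \<exists>l. ((\<lambda>s. C s \<omega>) \<longlongrightarrow> l) (at_left t)"
    if "\<omega> \<in> space M" for \<omega>
    using adm that unfolding admissible_def by auto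
  have ex: "\<exists>g\<in>borel_measurable M. AE \<omega> in M. C r \<omega> = g \<omega>" if "0 \<le> r" for r
    by (rule completion_ex_borel_measurable_real[OF adapted_completion[OF Ym ad that]])
  define G where "G r = (if 0 \<le> r then (SOME g. g \<in> borel_measurable M \<and> (AE \<omega> in M. C r \<omega> = g \<omega>)) else (\<lambda>_. 0))" for r
  have GG: "G r \<in> borel_measurable M \<and> (0 \<le> r \<longrightarrow> (AE \<omega> in M. C r \<omega> = G r \<omega>))" for r
  proof (cases "0 \<le> r")
    case True
    have "\<exists>g. g \<in> borel_measurable M \<and> (AE \<omega> in M. C r \<omega> = g \<omega>)" using ex[OF True] by blast
    from someI_ex[OF this] True show ?thesis by (simp add: G_def)
  qed (simp add: G_def)
  have Gm[measurable]: "G r \<in> borel_measurable M" for r using GG by blast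
  have "AE \<omega> in M. \<forall>k::rat. 0 \<le> real_of_rat k \<longrightarrow> C (real_of_rat k) \<omega> = G (real_of_rat k) \<omega>"
  proof (subst AE_all_countable, rule allI)
    fix k :: rat
    show "AE \<omega> in M. 0 \<le> real_of_rat k \<longrightarrow> C (real_of_rat k) \<omega> = G (real_of_rat k) \<omega>"
      using GG[of "real_of_rat k"] by (cases "0 \<le> real_of_rat k") auto
  qed
  then obtain Z where Z: "\<And>\<omega>. \<omega> \<in> space M - Z \<Longrightarrow> \<forall>k::rat. 0 \<le> real_of_rat k \<longrightarrow> C (real_of_rat k) \<omega> = G (real_of_rat k) \<omega>"
    and Zn: "Z \<in> null_sets M" by (rule AE_E3) blast
  have Zs[measurable]: "Z \<in> sets M" using Zn by auto
  have ZG: "C r \<omega> = G r \<omega>" if "\<omega> \<in> space M" "\<omega> \<notin> Z" "r \<in> \<rat>" "0 \<le> r" for \<omega> r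
  proof -
    obtain k where "r = real_of_rat k" using \<open>r \<in> \<rat>\<close> by (auto elim: Rats_cases)
    then show ?thesis using Z[of \<omega>] that by auto
  qed
  define rn where "rn n s = (real_of_int \<lfloor>real (Suc n) * s\<rfloor> + 1) / real (Suc n)" for n and s :: real
  define C2 where "C2 t \<omega> = (if \<omega> \<in> Z then c2 else max (C t \<omega>) c2)" for t \<omega>
  define H where "H \<omega> s = (if \<omega> \<in> Z then c2 else lim (\<lambda>n. max (G (rn n s) \<omega>) c2))" for \<omega> s
  have Gn[measurable]: "(\<lambda>z. G (rn n (snd z)) (fst z)) \<in> borel_measurable (M \<Otimes>\<^sub>M lborel)" for n
  proof -
    have "(\<lambda>z. (\<lambda>k z. G ((real_of_int k + 1) / real (Suc n)) (fst z)) \<lfloor>real (Suc n) * snd z\<rfloor> z)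
        \<in> borel_measurable (M \<Otimes>\<^sub>M lborel)"
      by (rule measurable_compose_countable) measurable
    then show ?thesis by (simp add: rn_def)
  qed
  have Hm: "(\<lambda>(\<omega>, s). H \<omega> s) \<in> borel_measurable (M \<Otimes>\<^sub>M lborel)"
  proof -
    have "(\<lambda>z. H (fst z) (snd z)) \<in> borel_measurable (M \<Otimes>\<^sub>M lborel)"
      unfolding H_def by measurable
    then show ?thesis by (simp add: case_prod_beta')
  qed
  have DH: "C2 s \<omega> = H \<omega> s" if \<omega>: "\<omega> \<in> space M" and s: "0 \<le> s" for \<omega> s
  proof (cases "\<omega> \<in> Z")
    case True then show ?thesis by (simp add: C2_def H_def)
  next
    case False
    have "((\<lambda>s. C s \<omega>) \<longlongrightarrow> C s \<omega>) (at_right s)"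
      using Cp(3)[OF \<omega> s] by (simp add: continuous_within)
    from filterlim_compose[OF this rn_lim[of s]]
    have "(\<lambda>n. C (rn n s) \<omega>) \<longlonglongrightarrow> C s \<omega>" by (simp add: rn_def)
    moreover have "C (rn n s) \<omega> = G (rn n s) \<omega>" for n
    proof (rule ZG[OF \<omega> False])
      show "rn n s \<in> \<rat>" unfolding rn_def by (rule rn_props(1))
      show "0 \<le> rn n s" using rn_props(2)[of s n] s unfolding rn_def by linarith
    qed
    ultimately have "(\<lambda>n. G (rn n s) \<omega>) \<longlonglongrightarrow> C s \<omega>" by simp
    then have "(\<lambda>n. max (G (rn n s) \<omega>) c2) \<longlonglongrightarrow> max (C s \<omega>) c2"
      by (intro tendsto_max tendsto_const)
    then have "lim (\<lambda>n. max (G (rn n s) \<omega>) c2) = max (C s \<omega>) c2" by (rule limI)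
    then show ?thesis using False by (simp add: C2_def H_def)
  qed
  have c2p: "p < c2" using pc by simp
  have C2p: "\<And>t. t \<ge> 0 \<Longrightarrow> c2 \<le> C2 t \<omega> \<and> C2 t \<omega> \<le> cbar"
    "mono_on {0..} (\<lambda>t. C2 t \<omega>)"
    "\<And>t. t \<ge> 0 \<Longrightarrow> continuous (at_right t) (\<lambda>s. C2 s \<omega>)"
    "\<And>t. t > 0 \<Longrightarrow> \<exists>l. ((\<lambda>s. C2 s \<omega>) \<longlongrightarrow> l) (at_left t)"
    if \<omega>: "\<omega> \<in> space M" for \<omega>
  proof -
    show "c2 \<le> C2 t \<omega> \<and> C2 t \<omega> \<le> cbar" if "t \<ge> 0" for t
      using Cp(1)[OF \<omega> that] pc by (auto simp: C2_def)
    show "mono_on {0..} (\<lambda>t. C2 t \<omega>)"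
    proof (rule mono_onI)
      fix r s :: real assume rs: "r \<in> {0..}" "s \<in> {0..}" "r \<le> s"
      have "C r \<omega> \<le> C s \<omega>" using Cp(2)[OF \<omega>] rs by (rule mono_onD)
      then have "max (C r \<omega>) c2 \<le> max (C s \<omega>) c2" by (rule max.mono) simp
      then show "C2 r \<omega> \<le> C2 s \<omega>" by (simp add: C2_def)
    qed
    show "continuous (at_right t) (\<lambda>s. C2 s \<omega>)" if "t \<ge> 0" for t
    proof (cases "\<omega> \<in> Z")
      case True then show ?thesis by (simp add: C2_def)
    next
      case False
      then show ?thesis using Cp(3)[OF \<omega> that] by (simp add: C2_def continuous_max)
    qed
    show "\<exists>l. ((\<lambda>s. C2 s \<omega>) \<longlongrightarrow> l) (at_left t)" if t0: "t > 0" for t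
    proof (cases "\<omega> \<in> Z")
      case True then show ?thesis by (auto simp: C2_def)
    next
      case False
      obtain l where "((\<lambda>s. C s \<omega>) \<longlongrightarrow> l) (at_left t)" using Cp(4)[OF \<omega> t0] by blast
      then have "((\<lambda>s. max (C s \<omega>) c2) \<longlongrightarrow> max l c2) (at_left t)" by (intro tendsto_max tendsto_const)
      then show ?thesis using False by (auto simp: C2_def)
    qed
  qed
  have adapted2: "adapted_to M ?F C2"
    unfolding adapted_to_def
  proof (intro allI impI ballI)
    fix t :: real and A :: "real set" assume t: "0 \<le> t" and A: "A \<in> sets borel"
    define B where "B = {y. max y c2 \<in> A}"
    have "(\<lambda>y. max y c2) -` A \<inter> space borel \<in> sets borel"
      by (rule measurable_sets[OF _ A]) measurable
    then have B: "B \<in> sets borel" by (simp add: B_def vimage_def)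
    have e: "C2 t -` A \<inter> space M = (if c2 \<in> A then Z else {}) \<union> ((space M - Z) \<inter> (C t -` B \<inter> space M))"
      using null_sets.sets_into_space[OF Zn] by (auto simp: C2_def B_def split: if_splits)
    have f1: "C t -` B \<inter> space M \<in> ?F t" using ad t B unfolding adapted_to_def by blast
    have f2: "space M - Z \<in> ?F t" by (intro Fl_Compl Fl_null Zn)
    have f3: "(if c2 \<in> A then Z else {}) \<in> ?F t"
      using Fl_null[OF Zn, of ?Y t] Fl_empty[of M ?Y t] by (cases "c2 \<in> A") auto
    show "C2 t -` A \<inter> space M \<in> ?F t" unfolding e by (rule Fl_Un[OF f3 Fl_Int[OF f2 f1]])
  qed
  have adm2: "admissible M ?F c2 cbar C2"
    unfolding admissible_def using adapted2 C2p by blast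
  have cb0: "0 < cbar" using pc p by linarith
  have Db2: "0 \<le> C2 s \<omega> \<and> C2 s \<omega> \<le> cbar" if "\<omega> \<in> space M" "s \<ge> 0" for \<omega> s
    using C2p(1)[OF that] c2p p by auto
  have pm: "(\<lambda>\<omega>. payoff q ?Y C2 \<omega>) \<in> borel_measurable M"
    by (rule payoff_measurable[where M=M and E=E and U=U and D=C2 and H=H and p=p and x=x and q=q and cb=cbar,
          OF Em Um' U0 C2p(2) Db2 Hm DH p cb0])
  have pb: "0 \<le> payoff q ?Y C2 \<omega> \<and> payoff q ?Y C2 \<omega> \<le> cbar * (x/(c2-p))" if \<omega>: "\<omega> \<in> space M" for \<omega>
  proof
    show "0 \<le> payoff q ?Y C2 \<omega>" by (rule payoff_nonneg) (use Db2[OF \<omega>] in blast)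
    have Xb: "\<And>t. t \<ge> 0 \<Longrightarrow> ?Y t \<omega> \<le> x + p * t" by (rule surplus_le) (rule U0[OF \<omega>])
    have a: "\<And>t. t \<ge> 0 \<Longrightarrow> c2 \<le> C2 t \<omega>" "\<And>t. t \<ge> 0 \<Longrightarrow> C2 t \<omega> \<le> cbar" using C2p(1)[OF \<omega>] by auto
    show "payoff q ?Y C2 \<omega> \<le> cbar * (x/(c2-p))"
      by (rule payoff_upper[where X="?Y" and C=C2 and \<omega>=\<omega>, OF Xb C2p(2)[OF \<omega>] a c2p x p q])
  qed
  have pint: "integrable M (payoff q ?Y C2)"
  proof (rule integrable_const_bound[where B="cbar * (x/(c2-p))"])
    show "AE \<omega> in M. norm (payoff q ?Y C2 \<omega>) \<le> cbar * (x/(c2-p))"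
      using pb by (intro AE_I2) auto
  qed (use pm in simp)
  define K where "K = cbar * ((c2-c1)*x/(c1-p)^2)"
  have K0: "0 \<le> K" using cb0 pc x by (simp add: K_def)
  have fin: "AE \<omega> in M. \<forall>t. finite {n. arrival E n \<omega> \<le> t}"
    by (rule arrivals_finite[OF dist[rule_format] \<beta> ind])
  have cmpAE: "AE \<omega> in M. payoff q ?Y C \<omega> \<le> payoff q ?Y C2 \<omega> + K"
    using fin AE_not_in[OF Zn] AE_space
  proof eventually_elim
    case (elim \<omega>)
    have \<omega>: "\<omega> \<in> space M" and nZ: "\<omega> \<notin> Z" and fn: "\<forall>t. finite {n. arrival E n \<omega> \<le> t}" using elim by auto
    have Xm: "\<And>t s. 0 \<le> t \<Longrightarrow> t \<le> s \<Longrightarrow> ?Y s \<omega> \<le> ?Y t \<omega> + p * (s - t)"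
      using surplus_mono[where U=U and \<omega>=\<omega> and E=E and p=p and x=x, OF U0[OF \<omega>] fn] by blast
    have Xb: "\<And>t. t \<ge> 0 \<Longrightarrow> ?Y t \<omega> \<le> x + p * t" by (rule surplus_le) (rule U0[OF \<omega>])
    have C2e: "C2 t \<omega> = max (C t \<omega>) c2" for t using nZ by (simp add: C2_def)
    have c1: "\<And>t. t \<ge> 0 \<Longrightarrow> c1 \<le> C t \<omega>" "\<And>t. t \<ge> 0 \<Longrightarrow> C t \<omega> \<le> cbar" using Cp(1)[OF \<omega>] by auto
    have d: "\<And>t. t \<ge> 0 \<Longrightarrow> c2 \<le> C2 t \<omega>"
       "\<And>t. t \<ge> 0 \<Longrightarrow> C2 t \<omega> \<le> C t \<omega> + (c2 - c1)"
       "\<And>t. t \<ge> 0 \<Longrightarrow> C t \<omega> \<le> C2 t \<omega>"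
       "\<And>t. t \<ge> 0 \<Longrightarrow> C2 t \<omega> \<le> cbar"
      using c1 pc by (auto simp: C2e)
    show ?case unfolding K_def
      by (rule payoff_compare[where X="?Y" and C=C and DD=C2 and \<omega>=\<omega>,
            OF Xm Xb Cp(2)[OF \<omega>] c1 C2p(2)[OF \<omega>] d pc(1,2) x p q])
  qed
  have "Jfun M q ?Y C \<le> Jfun M q ?Y C2 + K"
  proof (cases "integrable M (payoff q ?Y C)")
    case True
    have "Jfun M q ?Y C \<le> integral\<^sup>L M (\<lambda>\<omega>. payoff q ?Y C2 \<omega> + K)"
      unfolding Jfun_def by (rule integral_mono_AE[OF True _ cmpAE]) (use pint in simp)
    also have "\<dots> = Jfun M q ?Y C2 + K" unfolding Jfun_def using pint by (simp add: prob_space)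
    finally show ?thesis .
  next
    case False
    then have "Jfun M q ?Y C = 0" unfolding Jfun_def by (rule not_integrable_integral_eq)
    moreover have "0 \<le> Jfun M q ?Y C2" by (rule J_bounds(1)[OF adm2 c2p pc(3)])
    ultimately show ?thesis using K0 by simp
  qed
  then show ?thesis using adm2 unfolding K_def by blast
qed

end


theorem lemma9p4:
  fixes M :: "'w measure" and E U :: "nat \<Rightarrow> 'w \<Rightarrow> real" and F :: "real \<Rightarrow> real"
    and p \<beta> q cbar K :: real
  assumes "prob_space M"
    and "\<beta> > 0" and "p > 0" and "q > 0" and "cbar > 0"
    and "\<forall>n. distributed M lborel (E n) (exponential_density \<beta>)"
    and "\<forall>n. U n \<in> borel_measurable M"
    and "\<forall>n. \<forall>\<omega>\<in>space M. U n \<omega> > 0"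
    and "\<forall>n y. measure M {\<omega>\<in>space M. U n \<omega> \<le> y} = F y"
    and "prob_space.indep_vars M (\<lambda>_. borel) (\<lambda>i. case i of Inl n \<Rightarrow> E n | Inr n \<Rightarrow> U n) UNIV"
    and "continuous_on UNIV F"
    and "integrable M (U 0)" and "p > \<beta> * (\<integral>\<omega>. U 0 \<omega> \<partial>M)"
    and "\<forall>x y. x < y \<longrightarrow> 0 \<le> F y - F x \<and> F y - F x \<le> K * (y - x)"
    and "cbar > p"
  shows "\<exists>K2>0. \<exists>K3>0. \<forall>x c1 c2. 0 \<le> x \<longrightarrow> p < c1 \<longrightarrow> c1 \<le> c2 \<longrightarrow> c2 \<le> cbar \<longrightarrow>
           Vfun M p E U q cbar x c1 - Vfun M p E U q cbar x c2
             \<le> (K2 + K3 * x / (c1 - p)^2) * (c2 - c1)"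
proof -
  have main: "Vfun M p E U q cbar x c1 - Vfun M p E U q cbar x c2 \<le> (1 + cbar * x / (c1 - p)^2) * (c2 - c1)"
    if x: "0 \<le> x" and pc: "p < c1" "c1 \<le> c2" "c2 \<le> cbar" for x c1 c2 :: real
  proof -
  note ctx = assms(1,2,3,4,6,7,8,10) x
  let ?A = "\<lambda>c. {C. admissible M (nat_filtration M (surplus p E U x)) c cbar C}"
  let ?J = "\<lambda>C. Jfun M q (surplus p E U x) C"
  define Kb where "Kb = cbar * ((c2-c1)*x/(c1-p)^2)"
  have V: "Vfun M p E U q cbar x c = (SUP C\<in>?A c. ?J C)" for c by (simp add: Vfun_def)
  have c2p: "p < c2" using pc by simp
  have ne1: "?A c1 \<noteq> {}" using adm_const[of c1 cbar M "surplus p E U x"] pc by auto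
  have bdd2: "bdd_above (?J ` ?A c2)"
    using J_bounds(2)[OF ctx _ c2p pc(3)] by (intro bdd_aboveI2[where M="cbar * (x/(c2-p))"]) auto
  have "(SUP C\<in>?A c1. ?J C) \<le> (SUP C\<in>?A c2. ?J C) + Kb"
  proof (rule cSUP_least[OF ne1])
    fix C assume "C \<in> ?A c1"
    then have adm: "admissible M (nat_filtration M (surplus p E U x)) c1 cbar C" by simp
    obtain C2 where C2: "admissible M (nat_filtration M (surplus p E U x)) c2 cbar C2"
      "?J C \<le> ?J C2 + Kb"
      using compare[OF ctx adm pc] unfolding Kb_def by blast
    have "?J C2 \<le> (SUP C\<in>?A c2. ?J C)" using C2(1) bdd2 by (intro cSUP_upper) auto
    then show "?J C \<le> (SUP C\<in>?A c2. ?J C) + Kb" using C2(2) by simp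
  qed
  then have "Vfun M p E U q cbar x c1 - Vfun M p E U q cbar x c2 \<le> Kb" unfolding V by simp
  also have "Kb \<le> (1 + cbar * x / (c1 - p)^2) * (c2 - c1)"
  proof -
    have "0 \<le> c2 - c1" using pc by simp
    have "(1 + cbar * x / (c1 - p)^2) * (c2 - c1) = (c2 - c1) + Kb"
      unfolding Kb_def by (simp add: algebra_simps)
    then show ?thesis using \<open>0 \<le> c2 - c1\<close> by simp
  qed
  finally show "Vfun M p E U q cbar x c1 - Vfun M p E U q cbar x c2 \<le> (1 + cbar * x / (c1 - p)^2) * (c2 - c1)" .
  qed
  show ?thesis
    apply (rule exI[of _ 1])
    apply (rule conjI, simp)
    apply (rule exI[of _ cbar])
    using main assms(5) by blast
qed


end
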